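(* Let $\mathit{VI}$ be a finite set of variables with $\#\mathit{VI}=n$ and let $1\le k\le n$. For each $sh_1,sh_2\in\mathit{SH}$, if $\rho_{\mathit{TSD}_k}(sh_1)\ne\rho_{\mathit{TSD}_k}(sh_2)$ then there exist $\sigma\in\mathit{Subst}$ and $j\in\{1,\dots,k\}$ such that $\rho_{\mathit{TS}_j}(\mathrm{amgu}(sh_1,\sigma))\ne\rho_{\mathit{TS}_j}(\mathrm{amgu}(sh_2,\sigma))$.
   Context: $\mathit{SG}=\wp(\mathit{VI})\setminus\{\emptyset\}$ and $\mathit{SH}=\wp(\mathit{SG})$. $\rho_{\mathit{TSD}_k}(sh)=\{\,S\in\mathit{SG}\mid \forall T\subseteq S:\ \#T<k\implies S=\bigcup\{U\in sh\mid T\subseteq U\subseteq S\}\,\}$. For $S\in\mathit{SG}$, $\mathrm{tuples}_j(S)=\{T\subseteq S\mid\#T=j\}$, $\mathrm{tuples}_j(sh)=\bigcup_{S'\in sh}\mathrm{tuples}_j(S')$, and $\rho_{\mathit{TS}_j}(sh)=\{S\in\mathit{SG}\mid\mathrm{tuples}_j(S)\subseteq\mathrm{tuples}_j(sh)\}$. Terms are first-order terms (ground terms exist); $\mathrm{vars}(t)$ is the set of variables of $t$. $\mathit{Subst}$ is the set of idempotent substitutions (finite sets of bindings $x\mapsto t$, $t\ne x$), with variables in $\mathit{VI}$. $\mathrm{bin}(sh_1,sh_2)=\{S_1\cup S_2\mid S_i\in sh_i\}$; $sh^\star=\{S\in\mathit{SG}\mid\exists sh'\subseteq sh: S=\bigcup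 sh'\}$; $\mathrm{rel}(V,sh)=\{S\in sh\mid S\cap V\ne\emptyset\}$; with $v_x=\{x\}$, $v_t=\mathrm{vars}(t)$, $v_{xt}=v_x\cup v_t$: $\mathrm{amgu}(sh,x\mapsto t)=(sh\setminus\mathrm{rel}(v_{xt},sh))\cup\mathrm{bin}(\mathrm{rel}(v_x,sh)^\star,\mathrm{rel}(v_t,sh)^\star)$; $\mathrm{amgu}(sh,\emptyset)=sh$ and $\mathrm{amgu}(sh,\{x\mapsto t\}\cup\sigma)=\mathrm{amgu}(\mathrm{amgu}(sh,x\mapsto t),\sigma\setminus\{x\mapsto t\})$. *)

theory Defs
  imports Main
begin

datatype ('v, 'f) fterm = Var 'v | Fun 'f "('v, 'f) fterm list"

fun vars :: "('v, 'f) fterm \<Rightarrow> 'v set" where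
  "vars (Var x) = {x}"
| "vars (Fun f ts) = (\<Union>t \<in> set ts. vars t)"

type_synonym ('v, 'f) binding = "'v \<times> ('v, 'f) fterm"

fun subst_apply :: "('v, 'f) binding list \<Rightarrow> ('v, 'f) fterm \<Rightarrow> ('v, 'f) fterm" where
  "subst_apply \<sigma> (Var x) = (case map_of \<sigma> x of Some t \<Rightarrow> t | None \<Rightarrow> Var x)"
| "subst_apply \<sigma> (Fun f ts) = Fun f (map (subst_apply \<sigma>) ts)"

definition is_Subst :: "'v set \<Rightarrow> ('v, 'f) binding list \<Rightarrow> bool" where
  "is_Subst VI \<sigma> \<longleftrightarrow>
     distinct (map fst \<sigma>)
   \<and> (\<forall>(x, t) \<in> set \<sigma>. t \<noteq> Var x \<and> x \<in> VI \<and> vars t \<subseteq> VI)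
   \<and> (\<forall>t. subst_apply \<sigma> (subst_apply \<sigma> t) = subst_apply \<sigma> t)"

definition SG :: "'v set \<Rightarrow> 'v set set" where
  "SG VI = {S. S \<subseteq> VI \<and> S \<noteq> {}}"

definition SH :: "'v set \<Rightarrow> 'v set set set" where
  "SH VI = Pow (SG VI)"

definition rho_TSD :: "'v set \<Rightarrow> nat \<Rightarrow> 'v set set \<Rightarrow> 'v set set" where
  "rho_TSD VI k sh = {S \<in> SG VI. \<forall>T. T \<subseteq> S \<longrightarrow> card T < k \<longrightarrow>
                         S = \<Union>{U \<in> sh. T \<subseteq> U \<and> U \<subseteq> S}}"

definition tuples :: "nat \<Rightarrow> 'v set \<Rightarrow> 'v set set" where
  "tuples j S = {T. T \<subseteq> S \<and> card T = j}"

definition tuples_sh :: "nat \<Rightarrow> 'v set set \<Rightarrow> 'v set set" where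
  "tuples_sh j sh = (\<Union>S' \<in> sh. tuples j S')"

definition rho_TS :: "'v set \<Rightarrow> nat \<Rightarrow> 'v set set \<Rightarrow> 'v set set" where
  "rho_TS VI j sh = {S \<in> SG VI. tuples j S \<subseteq> tuples_sh j sh}"

definition bin :: "'v set set \<Rightarrow> 'v set set \<Rightarrow> 'v set set" where
  "bin sh1 sh2 = {S1 \<union> S2 | S1 S2. S1 \<in> sh1 \<and> S2 \<in> sh2}"

definition star :: "'v set \<Rightarrow> 'v set set \<Rightarrow> 'v set set" where
  "star VI sh = {S \<in> SG VI. \<exists>sh' \<subseteq> sh. S = \<Union>sh'}"

definition rel :: "'v set \<Rightarrow> 'v set set \<Rightarrow> 'v set set" where
  "rel V sh = {S \<in> sh. S \<inter> V \<noteq> {}}"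

definition amgu1 :: "'v set \<Rightarrow> 'v set set \<Rightarrow> ('v, 'f) binding \<Rightarrow> 'v set set" where
  "amgu1 VI sh b = (case b of (x, t) \<Rightarrow>
     (sh - rel ({x} \<union> vars t) sh) \<union> bin (star VI (rel {x} sh)) (star VI (rel (vars t) sh)))"

fun amgu :: "'v set \<Rightarrow> 'v set set \<Rightarrow> ('v, 'f) binding list \<Rightarrow> 'v set set" where
  "amgu VI sh [] = sh"
| "amgu VI sh (b # \<sigma>) = amgu VI (amgu1 VI sh b) \<sigma>"

end

theory Submission
  imports Defs
begin

lemma amgu_ground:
  "amgu VI sh (map (\<lambda>x. (x, Fun c [])) xs) = {U \<in> sh. U \<inter> set xs = {}}"
proof (induction xs arbitrary: sh)
  case Nil
  then show ?case by simp
next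
  case (Cons x xs)
  have st: "star VI {} = {}" unfolding star_def SG_def by auto
  have "amgu1 VI sh (x, Fun c []) = {U \<in> sh. x \<notin> U}"
    unfolding amgu1_def rel_def bin_def by (auto simp: st)
  then show ?case using Cons by auto
qed

lemma subst_ground_idem:
  "subst_apply (map (\<lambda>x. (x, Fun c [])) xs) (subst_apply (map (\<lambda>x. (x, Fun c [])) xs) t)
   = subst_apply (map (\<lambda>x. (x, Fun c [])) xs) t"
proof (induction t)
  case (Var x)
  then show ?case by (auto split: option.splits dest!: map_of_SomeD)
next
  case (Fun f ts)
  then show ?case by (auto intro: map_cong)
qed

lemma is_Subst_ground:
  assumes "distinct xs" "set xs \<subseteq> VI"
  shows "is_Subst VI (map (\<lambda>x. (x, Fun c [])) xs)"
  unfolding is_Subst_def using assms subst_ground_idem[of c xs]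
  by (auto simp: comp_def)

lemma main:
  fixes VI :: "'v set" and sh1 sh2 :: "'v set set"
  assumes fin: "finite VI" and k: "1 \<le> k"
    and s1: "sh1 \<subseteq> SG VI" and s2: "sh2 \<subseteq> SG VI"
    and S1: "S \<in> rho_TSD VI k sh1" and S2: "S \<notin> rho_TSD VI k sh2"
  shows "\<exists>(\<sigma> :: ('v, 'f) binding list) j. is_Subst VI \<sigma> \<and> j \<in> {1..k} \<and>
           rho_TS VI j (amgu VI sh1 \<sigma>) \<noteq> rho_TS VI j (amgu VI sh2 \<sigma>)"
proof -
  have SG: "S \<in> SG VI" and cov1: "\<And>T. T \<subseteq> S \<Longrightarrow> card T < k \<Longrightarrow> S = \<Union>{U \<in> sh1. T \<subseteq> U \<and> U \<subseteq> S}"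
    using S1 unfolding rho_TSD_def by auto
  obtain T where T: "T \<subseteq> S" "card T < k" "S \<noteq> \<Union>{U \<in> sh2. T \<subseteq> U \<and> U \<subseteq> S}"
    using S2 SG unfolding rho_TSD_def by auto
  have "\<Union>{U \<in> sh2. T \<subseteq> U \<and> U \<subseteq> S} \<subseteq> S" by auto
  then have "\<exists>y \<in> S. y \<notin> \<Union>{U \<in> sh2. T \<subseteq> U \<and> U \<subseteq> S}" using T(3) by auto
  then obtain y where y: "y \<in> S" "\<And>U. U \<in> sh2 \<Longrightarrow> T \<subseteq> U \<Longrightarrow> U \<subseteq> S \<Longrightarrow> y \<notin> U"
    by auto
  obtain U1 where U1: "U1 \<in> sh1" "T \<subseteq> U1" "U1 \<subseteq> S" "y \<in> U1"
    using cov1[OF T(1,2)] y(1) by blast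
  have SVI: "S \<subseteq> VI" using SG unfolding SG_def by auto
  define R where "R = insert y T"
  have "R \<subseteq> VI" using R_def T(1) y(1) SVI by auto
  then have finR: "finite R" using fin finite_subset by auto
  have finT: "finite T" using finR R_def by auto
  define j where "j = card R"
  have "card R \<le> card T + 1" unfolding R_def using finT by (simp add: card_insert_if)
  moreover have "card R \<ge> 1" using finR R_def by (simp add: Suc_le_eq card_gt_0_iff)
  ultimately have j: "j \<in> {1..k}" using T(2) unfolding j_def by auto
  obtain xs where xs: "set xs = VI - S" "distinct xs"
    using finite_distinct_list[of "VI - S"] fin by auto
  define \<sigma> :: "('v, 'f) binding list" where "\<sigma> = map (\<lambda>x. (x, Fun undefined [])) xs"
  have sub: "is_Subst VI \<sigma>" unfolding \<sigma>_def by (rule is_Subst_ground) (use xs in auto)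
  have a1: "amgu VI sh1 \<sigma> = {U \<in> sh1. U \<inter> (VI - S) = {}}"
    unfolding \<sigma>_def amgu_ground xs(1) ..
  have a2: "amgu VI sh2 \<sigma> = {U \<in> sh2. U \<inter> (VI - S) = {}}"
    unfolding \<sigma>_def amgu_ground xs(1) ..
  have RSG: "R \<in> SG VI" unfolding SG_def R_def using T(1) y(1) SVI by auto
  have tupR: "tuples j R = {R}"
    unfolding tuples_def j_def using card_subset_eq[OF finR] by auto
  have in1: "R \<in> rho_TS VI j (amgu VI sh1 \<sigma>)"
  proof -
    have "U1 \<in> amgu VI sh1 \<sigma>" using a1 U1 by auto
    moreover have "R \<in> tuples j U1" unfolding tuples_def j_def R_def using U1 by auto
    ultimately show ?thesis unfolding rho_TS_def tuples_sh_def using RSG tupR by auto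
  qed
  have nin2: "R \<notin> rho_TS VI j (amgu VI sh2 \<sigma>)"
  proof
    assume "R \<in> rho_TS VI j (amgu VI sh2 \<sigma>)"
    then obtain U where U: "U \<in> amgu VI sh2 \<sigma>" "R \<in> tuples j U"
      unfolding rho_TS_def tuples_sh_def using tupR by auto
    then have "U \<in> sh2" "U \<inter> (VI - S) = {}" using a2 by auto
    moreover have "U \<subseteq> VI" using \<open>U \<in> sh2\<close> s2 unfolding SG_def by auto
    ultimately have "U \<subseteq> S" by auto
    moreover have "R \<subseteq> U" using U(2) unfolding tuples_def by auto
    ultimately show False using y(2) \<open>U \<in> sh2\<close> R_def by auto
  qed
  show ?thesis using sub j in1 nin2 by blast
qed

theorem theorem3p17:
  fixes VI :: "'v set" and n k :: nat and sh1 sh2 :: "'v set set"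
  assumes "finite VI" and "card VI = n" and "1 \<le> k" and "k \<le> n"
    and "sh1 \<in> SH VI" and "sh2 \<in> SH VI"
    and "rho_TSD VI k sh1 \<noteq> rho_TSD VI k sh2"
  shows "\<exists>(\<sigma> :: ('v, 'f) binding list) j. is_Subst VI \<sigma> \<and> j \<in> {1..k} \<and>
           rho_TS VI j (amgu VI sh1 \<sigma>) \<noteq> rho_TS VI j (amgu VI sh2 \<sigma>)"
proof -
  have s: "sh1 \<subseteq> SG VI" "sh2 \<subseteq> SG VI" using assms(5,6) unfolding SH_def by auto
  obtain S where "(S \<in> rho_TSD VI k sh1 \<and> S \<notin> rho_TSD VI k sh2) \<or>
                  (S \<in> rho_TSD VI k sh2 \<and> S \<notin> rho_TSD VI k sh1)"
    using assms(7) by blast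
  then show ?thesis
  proof
    assume "S \<in> rho_TSD VI k sh1 \<and> S \<notin> rho_TSD VI k sh2"
    then show ?thesis using main[OF assms(1,3) s] by blast
  next
    assume "S \<in> rho_TSD VI k sh2 \<and> S \<notin> rho_TSD VI k sh1"
    then obtain \<sigma> :: "('v, 'f) binding list" and j where
      "is_Subst VI \<sigma> \<and> j \<in> {1..k} \<and> rho_TS VI j (amgu VI sh2 \<sigma>) \<noteq> rho_TS VI j (amgu VI sh1 \<sigma>)"
      using main[OF assms(1,3) s(2,1)] by blast
    then show ?thesis by metis
  qed
qed

end
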